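(* Let $\Gamma$ be a connected simplicial graph which is tree-graded with respect to a collection of subgraphs $\{\Gamma_i\}_{i\in I}$, and fix a basepoint $e\in V(\Gamma)$. Then for each $x\in V(\Gamma)$ there are finite sets $I_x=\{i_0,i_1,\dots,i_k\}\subseteq I$ and $\{x_0,\dots,x_k=x\}\subseteq V(\Gamma)$ such that every geodesic $g$ from $e$ to $x$ can be decomposed as a concatenation of subgeodesics \[ g=g_0\,\overline{g_0}\,g_1\,\overline{g_1}\cdots\overline{g_{k-1}}\,g_k \] such that for each $j$: (i) $g_j\subseteq\Gamma_{i_j}$, the initial vertex of $g_j$ is $e_j$, the unique vertex of $\Gamma_{i_j}$ at minimal distance from $e_0=e$, and the terminal vertex of $g_j$ is $x_j$; and (ii) $\overline{g_j}$ has length at most $1$.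
   Context: A connected simplicial graph $\Gamma$ is tree-graded with respect to a collection $\{\Gamma_i\}_{i\in I}$ of non-empty connected subgraphs if (1) every vertex and every simple loop of $\Gamma$ is contained in some $\Gamma_i$, and (2) for $i\neq j$, $\Gamma_i\not\subseteq\Gamma_j$ and $|V(\Gamma_i)\cap V(\Gamma_j)|\leq 1$. $\Gamma$ carries the shortest path metric. *)

theory Defs
  imports Main
begin

definition simplicial_graph :: "'a set \<Rightarrow> ('a \<Rightarrow> 'a \<Rightarrow> bool) \<Rightarrow> bool" where
  "simplicial_graph V adj \<longleftrightarrow>
     (\<forall>u v. adj u v \<longrightarrow> adj v u) \<and> (\<forall>u. \<not> adj u u) \<and>
     (\<forall>u v. adj u v \<longrightarrow> u \<in> V \<and> v \<in> V)"

definition walk :: "('a \<Rightarrow> 'a \<Rightarrow> bool) \<Rightarrow> 'a list \<Rightarrow> bool" where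
  "walk adj p \<longleftrightarrow> p \<noteq> [] \<and> successively adj p"

definition connected_graph :: "'a set \<Rightarrow> ('a \<Rightarrow> 'a \<Rightarrow> bool) \<Rightarrow> bool" where
  "connected_graph V adj \<longleftrightarrow>
     (\<forall>u\<in>V. \<forall>v\<in>V. \<exists>p. walk adj p \<and> set p \<subseteq> V \<and> hd p = u \<and> last p = v)"

definition gdist :: "('a \<Rightarrow> 'a \<Rightarrow> bool) \<Rightarrow> 'a \<Rightarrow> 'a \<Rightarrow> nat" where
  "gdist adj u v = (LEAST n. \<exists>p. walk adj p \<and> hd p = u \<and> last p = v \<and> length p = Suc n)"

definition geodesic :: "('a \<Rightarrow> 'a \<Rightarrow> bool) \<Rightarrow> 'a \<Rightarrow> 'a \<Rightarrow> 'a list \<Rightarrow> bool" where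
  "geodesic adj u v p \<longleftrightarrow> walk adj p \<and> hd p = u \<and> last p = v \<and> length p = Suc (gdist adj u v)"

definition subgraph :: "'a set \<Rightarrow> ('a \<Rightarrow> 'a \<Rightarrow> bool) \<Rightarrow> 'a set \<Rightarrow> ('a \<Rightarrow> 'a \<Rightarrow> bool) \<Rightarrow> bool" where
  "subgraph W F V adj \<longleftrightarrow> W \<subseteq> V \<and>
     (\<forall>u v. F u v \<longrightarrow> adj u v \<and> u \<in> W \<and> v \<in> W) \<and> (\<forall>u v. F u v \<longrightarrow> F v u)"

definition simple_loop :: "('a \<Rightarrow> 'a \<Rightarrow> bool) \<Rightarrow> 'a list \<Rightarrow> bool" where
  "simple_loop adj c \<longleftrightarrow> length c \<ge> 3 \<and> distinct c \<and> successively adj c \<and> adj (last c) (hd c)"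

definition tree_graded ::
  "'a set \<Rightarrow> ('a \<Rightarrow> 'a \<Rightarrow> bool) \<Rightarrow> 'i set \<Rightarrow> ('i \<Rightarrow> 'a set) \<Rightarrow> ('i \<Rightarrow> 'a \<Rightarrow> 'a \<Rightarrow> bool) \<Rightarrow> bool" where
  "tree_graded V adj I SV SE \<longleftrightarrow>
     simplicial_graph V adj \<and> connected_graph V adj \<and>
     (\<forall>i\<in>I. subgraph (SV i) (SE i) V adj \<and> SV i \<noteq> {} \<and> connected_graph (SV i) (SE i)) \<and>
     (\<forall>v\<in>V. \<exists>i\<in>I. v \<in> SV i) \<and>
     (\<forall>c. simple_loop adj c \<longrightarrow>
        (\<exists>i\<in>I. set c \<subseteq> SV i \<and> successively (SE i) c \<and> SE i (last c) (hd c))) \<and>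
     (\<forall>i\<in>I. \<forall>j\<in>I. i \<noteq> j \<longrightarrow>
        \<not> (SV i \<subseteq> SV j \<and> (\<forall>u v. SE i u v \<longrightarrow> SE j u v)) \<and>
        card (SV i \<inter> SV j) \<le> 1 \<and> finite (SV i \<inter> SV j))"

end

theory Submission
  imports Defs
begin

lemma walk_iff_nth: "walk R p \<longleftrightarrow> p \<noteq> [] \<and> (\<forall>m. Suc m < length p \<longrightarrow> R (p!m) (p!Suc m))"
  by (simp add: walk_def successively_conv_nth)

lemma walk_nth: "walk R p \<Longrightarrow> Suc m < length p \<Longrightarrow> R (p!m) (p!Suc m)"
  by (simp add: walk_iff_nth)

lemma walk_map_upt:
  assumes "\<And>m. m < L \<Longrightarrow> R (f m) (f (Suc m))"
  shows "walk R (map f [0..<Suc L])"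
  using assms by (auto simp: walk_iff_nth nth_append simp del: upt_Suc)

lemma distinct_map_upt:
  assumes "\<And>m1 m2. m1 \<le> L \<Longrightarrow> m2 \<le> L \<Longrightarrow> f m1 = f m2 \<Longrightarrow> m1 = m2"
  shows "distinct (map f [0..<Suc L])"
  using assms by (auto simp: distinct_map inj_on_def simp del: upt_Suc)

lemma walk_take: "walk R p \<Longrightarrow> n < length p \<Longrightarrow> walk R (take (Suc n) p)"
  by (auto simp: walk_iff_nth)

lemma walk_drop: "walk R p \<Longrightarrow> n < length p \<Longrightarrow> walk R (drop n p)"
  by (auto simp: walk_iff_nth)

lemma walk_append: "walk R p \<Longrightarrow> walk R q \<Longrightarrow> R (last p) (hd q) \<Longrightarrow> walk R (p @ q)"
  by (auto simp: walk_def successively_append_iff)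

lemma mu_len: "length (map f [0..<Suc L]) = Suc L" by simp
lemma mu_hd: "hd (map f [0..<Suc L]) = f 0" by (simp del: upt_Suc add: hd_map upt_conv_Cons)
lemma mu_last: "last (map f [0..<Suc L]) = f L" by simp
lemma mu_nth: "m \<le> L \<Longrightarrow> map f [0..<Suc L] ! m = f m" by (simp del: upt_Suc)
lemma mu_set: "set (map f [0..<Suc L]) = f ` {0..L}" by (auto simp del: upt_Suc)

lemma gdist_le: "walk adj p \<Longrightarrow> gdist adj (hd p) (last p) \<le> length p - 1"
proof -
  assume w: "walk adj p"
  hence "p \<noteq> []" by (simp add: walk_def)
  hence "\<exists>q. walk adj q \<and> hd q = hd p \<and> last q = last p \<and> length q = Suc (length p - 1)"
    using w by (intro exI[of _ p]) auto
  thus ?thesis unfolding gdist_def by (rule Least_le)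
qed

lemma gdist_ex: "walk adj p \<Longrightarrow> hd p = u \<Longrightarrow> last p = v \<Longrightarrow> \<exists>q. geodesic adj u v q"
  unfolding geodesic_def gdist_def
  apply (rule exI)
  apply (rule LeastI_ex[where P="\<lambda>n. \<exists>p. walk adj p \<and> hd p = u \<and> last p = v \<and> length p = Suc n", THEN someI_ex])
  using walk_def by (metis Suc_pred' length_greater_0_conv)

lemma geodesic_dist:
  assumes G: "geodesic adj u x g" and m: "m < length g"
  shows "gdist adj u (g!m) = m"
proof -
  have W: "walk adj g" "hd g = u" "last g = x" "length g = Suc (gdist adj u x)"
    using G by (auto simp: geodesic_def)
  have g0: "g \<noteq> []" using W by (auto simp: walk_def)
  have Wt: "walk adj (take (Suc m) g)" using walk_take W m by blast
  have ht: "hd (take (Suc m) g) = u" using W g0 by (simp add: hd_conv_nth)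
  have lt: "last (take (Suc m) g) = g!m" using m g0 by (simp add: take_Suc_conv_app_nth)
  have "length (take (Suc m) g) - 1 = m" using m by simp
  hence le: "gdist adj u (g!m) \<le> m"
    using gdist_le[OF Wt] ht lt by simp
  show ?thesis
  proof (rule ccontr)
    assume "gdist adj u (g!m) \<noteq> m"
    hence lt2: "gdist adj u (g!m) < m" using le by simp
    obtain p where P: "geodesic adj u (g!m) p" using gdist_ex[OF Wt ht lt] by blast
    have Pw: "walk adj p" "hd p = u" "last p = g!m" "length p = Suc (gdist adj u (g!m))"
      using P by (auto simp: geodesic_def)
    show False
    proof (cases "Suc m < length g")
      case True
      let ?q = "p @ drop (Suc m) g"
      have hdd: "hd (drop (Suc m) g) = g ! Suc m" using True by (simp add: hd_drop_conv_nth)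
      have wq: "walk adj ?q"
        apply (rule walk_append)
        using Pw(1) apply simp
        using walk_drop[OF W(1) True] apply simp
        using Pw(3) hdd walk_nth[OF W(1) True] by simp
      have hq: "hd ?q = u" using Pw by (auto simp: walk_def)
      have lq: "last ?q = x" using W True by (simp add: last_drop)
      have "gdist adj u x \<le> length ?q - 1" using gdist_le[OF wq] unfolding hq lq .
      moreover have "length ?q = length p + (length g - Suc m)" by simp
      ultimately show False using Pw(4) W(4) lt2 True by linarith
    next
      case False
      hence mm: "length g - 1 = m" using m by linarith
      have "x = g ! (length g - 1)" using last_conv_nth[OF g0] W(3) by simp
      hence "g!m = x" unfolding mm by simp
      hence "gdist adj u x \<le> length p - 1" using gdist_le[OF Pw(1)] Pw(2,3) by simp
      moreover have "length p - 1 = gdist adj u (g!m)" using Pw(4) by simp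
      moreover have "m \<le> gdist adj u x" using m W(4) by simp
      ultimately show False using lt2 by simp
    qed
  qed
qed

lemma geodesic_inj:
  assumes "geodesic adj u x g" "m1 < length g" "m2 < length g" "g!m1 = g!m2"
  shows "m1 = m2"
  using geodesic_dist[OF assms(1,2)] geodesic_dist[OF assms(1,3)] assms(4) by metis

lemma geodesic_distinct: assumes G: "geodesic adj u x g" shows "distinct g"
  unfolding distinct_conv_nth using geodesic_inj[OF G] by metis

lemma walk_distinct:
  "walk R p \<Longrightarrow> \<exists>q. walk R q \<and> distinct q \<and> hd q = hd p \<and> last q = last p \<and> set q \<subseteq> set p"
proof (induction "length p" arbitrary: p rule: less_induct)
  case less
  show ?case
  proof (cases "distinct p")
    case True thus ?thesis using less.prems by blast
  next
    case False
    then obtain a b where ab: "a < b" "b < length p" "p!a = p!b"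
      by (auto simp: distinct_conv_nth) (metis linorder_neqE_nat)
    have p0: "p \<noteq> []" using less.prems by (simp add: walk_def)
    let ?q = "take a p @ drop b p"
    have Wd: "walk R (drop b p)" using walk_drop less.prems ab by blast
    have hdb: "hd (drop b p) = p!b" using ab by (simp add: hd_drop_conv_nth)
    have lq: "last ?q = last p" using ab by (simp add: last_drop)
    have len: "length ?q < length p" using ab by simp
    have sq: "set ?q \<subseteq> set p" by (auto dest: in_set_takeD in_set_dropD)
    have wq: "walk R ?q \<and> hd ?q = hd p"
    proof (cases a)
      case 0
      thus ?thesis using Wd hdb ab p0 by (simp add: hd_conv_nth)
    next
      case (Suc a')
      have Wt: "walk R (take (Suc a') p)" using walk_take[OF less.prems, of a'] ab Suc by simp
      have lt: "last (take (Suc a') p) = p!a'" using ab Suc p0 by (simp add: take_Suc_conv_app_nth)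
      have e: "R (p!a') (p!b)" using walk_nth[OF less.prems, of a'] ab Suc by simp
      have "walk R ?q" using walk_append[OF Wt Wd] lt hdb e Suc by simp
      moreover have "hd ?q = hd p" using Suc p0 by simp
      ultimately show ?thesis by blast
    qed
    obtain q where "walk R q \<and> distinct q \<and> hd q = hd ?q \<and> last q = last ?q \<and> set q \<subseteq> set ?q"
      using less.hyps[OF len] wq by blast
    thus ?thesis using wq lq sq by auto
  qed
qed

definition cn :: "'i set \<Rightarrow> ('i \<Rightarrow> 'a set) \<Rightarrow> 'a \<Rightarrow> 'a \<Rightarrow> bool" where
  "cn I SV u v \<longleftrightarrow> (\<exists>Q\<in>I. u \<in> SV Q \<and> v \<in> SV Q)"

definition segok :: "'i set \<Rightarrow> ('i \<Rightarrow> 'a set) \<Rightarrow> 'a list \<Rightarrow> nat \<Rightarrow> 'i \<Rightarrow> nat \<Rightarrow> nat \<Rightarrow> bool" where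
  "segok I SV g n P s t \<longleftrightarrow> P \<in> I \<and> s \<le> t \<and> t \<le> n \<and> g!s \<in> SV P \<and> g!t \<in> SV P \<and>
     (t < n \<longrightarrow> g!Suc t \<notin> SV P) \<and> (0 < s \<longrightarrow> g!(s-1) \<notin> SV P) \<and>
     (s = t \<and> t < n \<longrightarrow> \<not> cn I SV (g!t) (g!Suc t))"

definition linkok :: "'i set \<Rightarrow> ('i \<Rightarrow> 'a set) \<Rightarrow> 'a list \<Rightarrow> nat \<Rightarrow> nat \<Rightarrow> nat \<Rightarrow> bool" where
  "linkok I SV g t s' t' \<longleftrightarrow> t < t' \<and> t \<le> s' \<and> s' \<le> Suc t \<and> (s' = Suc t \<longrightarrow> \<not> cn I SV (g!t) (g!Suc t))"

definition pre :: "'i set \<Rightarrow> ('i \<Rightarrow> 'a set) \<Rightarrow> 'a list \<Rightarrow> nat \<Rightarrow> nat \<Rightarrow> bool" where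
  "pre I SV g n p \<longleftrightarrow> p = 0 \<or> \<not> cn I SV (g!(p-1)) (g!p) \<or>
     (p < n \<and> cn I SV (g!p) (g!Suc p) \<and> (\<forall>Q\<in>I. g!p \<in> SV Q \<longrightarrow> g!Suc p \<in> SV Q \<longrightarrow> g!(p-1) \<notin> SV Q))"

locale TG =
  fixes V :: "'a set" and adj :: "'a \<Rightarrow> 'a \<Rightarrow> bool"
    and I :: "'i set" and SV :: "'i \<Rightarrow> 'a set" and SE :: "'i \<Rightarrow> 'a \<Rightarrow> 'a \<Rightarrow> bool"
  assumes tg: "tree_graded V adj I SV SE"
begin

lemma adj_sym: "adj u v \<Longrightarrow> adj v u"
  using tg by (auto simp: tree_graded_def simplicial_graph_def)

lemma adj_irrefl: "\<not> adj u u"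
  using tg by (auto simp: tree_graded_def simplicial_graph_def)

lemma adj_V: "adj u v \<Longrightarrow> u \<in> V \<and> v \<in> V"
  using tg by (auto simp: tree_graded_def simplicial_graph_def)

lemma conn: "connected_graph V adj"
  using tg by (auto simp: tree_graded_def)

lemma SE_adj: "i \<in> I \<Longrightarrow> SE i u v \<Longrightarrow> adj u v \<and> u \<in> SV i \<and> v \<in> SV i"
  using tg by (auto simp: tree_graded_def subgraph_def)

lemma SE_sym: "i \<in> I \<Longrightarrow> SE i u v \<Longrightarrow> SE i v u"
  using tg by (auto simp: tree_graded_def subgraph_def)

lemma SV_V: "i \<in> I \<Longrightarrow> SV i \<subseteq> V"
  using tg by (auto simp: tree_graded_def subgraph_def)

lemma piece_conn: "i \<in> I \<Longrightarrow> connected_graph (SV i) (SE i)"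
  using tg by (auto simp: tree_graded_def)

lemma vertex_piece: "v \<in> V \<Longrightarrow> \<exists>i\<in>I. v \<in> SV i"
  using tg by (auto simp: tree_graded_def)

lemma loop_piece: "simple_loop adj c \<Longrightarrow>
   \<exists>i\<in>I. set c \<subseteq> SV i \<and> successively (SE i) c \<and> SE i (last c) (hd c)"
  using tg unfolding tree_graded_def by blast

lemma two_common:
  assumes "i \<in> I" "j \<in> I" "u \<noteq> v" "u \<in> SV i" "v \<in> SV i" "u \<in> SV j" "v \<in> SV j"
  shows "i = j"
proof (rule ccontr)
  assume "i \<noteq> j"
  hence "card (SV i \<inter> SV j) \<le> 1" "finite (SV i \<inter> SV j)"
    using tg assms(1,2) unfolding tree_graded_def by blast+
  moreover have "{u, v} \<subseteq> SV i \<inter> SV j" using assms by auto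
  ultimately have "card {u, v} \<le> 1" by (meson card_mono order_trans)
  thus False using assms(3) by simp
qed

lemma piece_path:
  assumes "i \<in> I" "u \<in> SV i" "v \<in> SV i"
  shows "\<exists>q. walk (SE i) q \<and> distinct q \<and> hd q = u \<and> last q = v \<and> set q \<subseteq> SV i"
proof -
  obtain p where "walk (SE i) p" "set p \<subseteq> SV i" "hd p = u" "last p = v"
    using piece_conn[OF assms(1)] assms(2,3) unfolding connected_graph_def by blast
  thus ?thesis using walk_distinct[of "SE i" p] by fastforce
qed

lemma SE_walk_adj: "i \<in> I \<Longrightarrow> walk (SE i) q \<Longrightarrow> walk adj q"
  unfolding walk_def using SE_adj by (auto intro: successively_mono)

lemma induced:
  assumes i: "i \<in> I" and uv: "u \<in> SV i" "v \<in> SV i" "adj u v"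
  shows "SE i u v"
proof -
  have ne: "u \<noteq> v" using uv(3) adj_irrefl by blast
  obtain q where Q: "walk (SE i) q" "distinct q" "hd q = v" "last q = u" "set q \<subseteq> SV i"
    using piece_path[OF i uv(2,1)] by blast
  have q0: "q \<noteq> []" using Q by (simp add: walk_def)
  show ?thesis
  proof (cases "length q \<le> 2")
    case True
    have "length q \<noteq> 1" using Q ne q0 by (metis One_nat_def hd_conv_nth last_conv_nth diff_Suc_1)
    moreover have "length q > 0" using q0 by simp
    ultimately have "length q = 2" using True by linarith
    hence "SE i (q!0) (q!1)" using walk_nth[OF Q(1), of 0] by simp
    moreover have "q!0 = v" "q!1 = u" using Q(3,4) q0 \<open>length q = 2\<close>
      by (simp_all add: hd_conv_nth last_conv_nth)
    ultimately show ?thesis using SE_sym[OF i] by blast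
  next
    case False
    have "simple_loop adj q"
      unfolding simple_loop_def using False Q SE_walk_adj[OF i Q(1)] uv(3)
      by (auto simp: walk_def)
    then obtain j where j: "j \<in> I" "set q \<subseteq> SV j" "SE j (last q) (hd q)"
      using loop_piece by blast
    have "u \<in> SV j" "v \<in> SV j" using j(2) Q(3,4) q0 by auto
    hence "j = i" using two_common[OF j(1) i ne] uv by blast
    thus ?thesis using j(3) Q(3,4) by simp
  qed
qed

lemma core:
  assumes i: "i \<in> I" and W: "walk adj w" "distinct w" "length w \<ge> 3"
    and h: "hd w \<in> SV i" "last w \<in> SV i"
    and int: "\<And>m. 0 < m \<Longrightarrow> m < length w - 1 \<Longrightarrow> w!m \<notin> SV i"
  shows False
proof -
  have w0: "w \<noteq> []" using W by (simp add: walk_def)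
  have hdw: "hd w = w!0" using w0 by (simp add: hd_conv_nth)
  have lastw: "last w = w!(length w - 1)" using w0 by (simp add: last_conv_nth)
  have hl: "hd w \<noteq> last w" unfolding hdw lastw using W(2,3) nth_eq_iff_index_eq[OF W(2), of 0 "length w - 1"] w0 by simp
  obtain q where Q: "walk (SE i) q" "distinct q" "hd q = last w" "last q = hd w" "set q \<subseteq> SV i"
    using piece_path[OF i h(2,1)] by blast
  obtain u0 r where qr: "q = u0 # r" using Q(1) by (cases q) (auto simp: walk_def)
  have r0: "r \<noteq> []" using qr Q(3,4) hl by auto
  obtain mid u1 where rm: "r = mid @ [u1]" using r0 by (cases r rule: rev_exhaust) auto
  have qf: "q = u0 # mid @ [u1]" using qr rm by simp
  have u0: "u0 = last w" and u1: "u1 = hd w" using Q(3,4) qf by auto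
  have sq: "successively (SE i) (u0 # mid @ [u1])" using Q(1) qf by (simp add: walk_def)
  have dq: "distinct (u0 # mid @ [u1])" using Q(2) qf by simp
  have midSV: "set mid \<subseteq> SV i" using Q(5) qf by auto
  have smid: "successively (SE i) mid" using sq by (simp add: successively_Cons successively_append_iff)
  have e1: "mid \<noteq> [] \<Longrightarrow> SE i u0 (hd mid)" using sq by (cases mid) auto
  have e2: "SE i (last (u0 # mid)) u1"
  proof (cases "mid = []")
    case True thus ?thesis using sq by simp
  next
    case False thus ?thesis using sq by (simp add: successively_Cons successively_append_iff)
  qed
  let ?c = "w @ mid"
  have disj: "set w \<inter> set mid = {}"
  proof (rule ccontr)
    assume "set w \<inter> set mid \<noteq> {}"
    then obtain y where y: "y \<in> set w" "y \<in> set mid" by blast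
    then obtain m where m: "m < length w" "w!m = y" by (auto simp: in_set_conv_nth)
    have ySV: "y \<in> SV i" using y midSV by auto
    have yu: "y \<noteq> u0" "y \<noteq> u1" using dq y(2) by auto
    have "m \<noteq> 0" using yu(2) m(2) u1 hdw by metis
    moreover have "m \<noteq> length w - 1" using yu(1) m(2) u0 lastw by metis
    ultimately have "0 < m" "m < length w - 1" using m(1) by linarith+
    thus False using int[of m] m ySV by simp
  qed
  have "simple_loop adj ?c"
    unfolding simple_loop_def
  proof (intro conjI)
    show "3 \<le> length ?c" using W(3) by simp
    show "distinct ?c" using W(2) dq disj by simp
    have "successively adj mid" using smid SE_adj[OF i] by (auto intro: successively_mono)
    moreover have "mid \<noteq> [] \<Longrightarrow> adj (last w) (hd mid)" using e1 u0 SE_adj[OF i] by blast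
    ultimately show "successively adj ?c" using W(1) by (auto simp: walk_def successively_append_iff)
    have "last ?c = last (u0 # mid)" using u0 by (cases "mid = []") auto
    moreover have "hd ?c = u1" using w0 u1 by simp
    ultimately show "adj (last ?c) (hd ?c)" using e2 SE_adj[OF i] by simp
  qed
  then obtain j where j: "j \<in> I" "set ?c \<subseteq> SV j" using loop_piece by blast
  have "hd w \<in> SV j" "last w \<in> SV j" "w!1 \<in> SV j" using j(2) w0 W(3) by (auto simp: nth_mem)
  hence "j = i" using two_common[OF j(1) i hl] h by blast
  thus False using int[of 1] W(3) \<open>w!1 \<in> SV j\<close> by simp
qed

lemma convex0:
  assumes i: "i \<in> I" and g: "walk adj g" "distinct g" and bl: "b < length g"
    and gb: "g!b \<in> SV i"
  shows "a \<le> b \<Longrightarrow> g!a \<in> SV i \<Longrightarrow> \<forall>m. a \<le> m \<and> m \<le> b \<longrightarrow> g!m \<in> SV i"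
proof (induction "b - a" arbitrary: a rule: less_induct)
  case less
  show ?case
  proof (cases "a = b")
    case True thus ?thesis using less.prems by auto
  next
    case False
    hence ab: "a < b" using less.prems by simp
    show ?thesis
    proof (cases "g!(Suc a) \<in> SV i")
      case True
      have "\<forall>m. Suc a \<le> m \<and> m \<le> b \<longrightarrow> g!m \<in> SV i"
        using less.hyps[of "Suc a"] ab True by simp
      thus ?thesis using less.prems(2) by (metis le_antisym not_less_eq_eq)
    next
      case False
      define b' where "b' = (LEAST b'. a < b' \<and> g!b' \<in> SV i)"
      have b'1: "a < b' \<and> g!b' \<in> SV i" unfolding b'_def by (rule LeastI[of _ b]) (use ab gb in auto)
      have b'2: "b' \<le> b" unfolding b'_def by (rule Least_le) (use ab gb in auto)
      have b'3: "\<And>m. a < m \<Longrightarrow> m < b' \<Longrightarrow> g!m \<notin> SV i"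
        using not_less_Least b'_def by blast
      have b'4: "b' \<noteq> Suc a" using b'1 False by auto
      define w where "w = map (\<lambda>m. g!(a+m)) [0..<Suc (b' - a)]"
      have "walk adj w" unfolding w_def
        by (rule walk_map_upt) (use walk_nth[OF g(1)] b'2 bl in auto)
      moreover have "distinct w" unfolding w_def
      proof (rule distinct_map_upt)
        fix m1 m2 assume A: "m1 \<le> b' - a" "m2 \<le> b' - a" "g ! (a + m1) = g ! (a + m2)"
        have "a + m1 < length g" "a + m2 < length g" using A(1,2) b'1 b'2 bl by linarith+
        thus "m1 = m2" using nth_eq_iff_index_eq[OF g(2), of "a+m1" "a+m2"] A(3) by simp
      qed
      moreover have "length w \<ge> 3" unfolding w_def mu_len using b'1 b'4 by linarith
      moreover have "hd w \<in> SV i" unfolding w_def mu_hd using less.prems by simp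
      moreover have "last w \<in> SV i" unfolding w_def mu_last using b'1 by simp
      moreover have "\<And>m. 0 < m \<Longrightarrow> m < length w - 1 \<Longrightarrow> w!m \<notin> SV i"
      proof -
        fix m assume "0 < m" "m < length w - 1"
        hence "m < b' - a" "0 < m" unfolding w_def mu_len by (simp_all del: upt_Suc)
        moreover have "a + m < b'" using \<open>m < b' - a\<close> by linarith
        ultimately show "w!m \<notin> SV i" unfolding w_def using b'3[of "a+m"] mu_nth[of m "b' - a"] by (simp del: upt_Suc)
      qed
      ultimately show ?thesis using core[OF i] by blast
    qed
  qed
qed

lemma convex:
  assumes i: "i \<in> I" and g: "walk adj g" "distinct g" and bl: "b < length g"
    and ga: "g!a \<in> SV i" and gb: "g!b \<in> SV i" and m: "a \<le> m" "m \<le> b"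
  shows "g!m \<in> SV i"
  using convex0[OF i g bl gb, of a] ga m by auto

lemma geo_walk: "geodesic adj e x g \<Longrightarrow> walk adj g"
  by (simp add: geodesic_def)

lemma geo_hd: "geodesic adj e x g \<Longrightarrow> g!0 = e"
  by (auto simp: geodesic_def walk_def hd_conv_nth)

lemma geo_last: assumes "geodesic adj e x g" shows "g!(length g - 1) = x"
proof -
  have "g \<noteq> []" "last g = x" using assms by (auto simp: geodesic_def walk_def)
  thus ?thesis by (metis last_conv_nth)
qed

lemma geo_len: "geodesic adj e x g \<Longrightarrow> length g = Suc (gdist adj e x)"
  by (simp add: geodesic_def)

lemma geo_cross:
  assumes "geodesic adj e x g" "geodesic adj e y h" "m < length g" "m' < length h" "g!m = h!m'"
  shows "m = m'"
  using geodesic_dist[OF assms(1,3)] geodesic_dist[OF assms(2,4)] assms(5) by metis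

lemma cut:
  assumes G: "geodesic adj e x g" and G': "geodesic adj e x g'" and c: "0 < c" "c < length g - 1"
   and nc: "\<not>(\<exists>Q\<in>I. g!(c-1) \<in> SV Q \<and> g!(Suc c) \<in> SV Q)"
  shows "g'!c = g!c"
proof (rule ccontr)
  assume ne: "g'!c \<noteq> g!c"
  have len: "length g' = length g" using geo_len[OF G] geo_len[OF G'] by simp
  have Wg: "walk adj g" and Wg': "walk adj g'" using G G' by (simp_all add: geo_walk)
  have K: "\<And>m m'. m < length g \<Longrightarrow> m' < length g \<Longrightarrow> g!m = g'!m' \<Longrightarrow> m = m'"
    using geo_cross[OF G G'] len by simp
  have Kg: "\<And>m m'. m < length g \<Longrightarrow> m' < length g \<Longrightarrow> g!m = g!m' \<Longrightarrow> m = m'"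
    using geo_cross[OF G G] by simp
  have Kg': "\<And>m m'. m < length g \<Longrightarrow> m' < length g \<Longrightarrow> g'!m = g'!m' \<Longrightarrow> m = m'"
    using geo_cross[OF G' G'] len by simp
  define A where "A = {a. a < c \<and> g!a = g'!a}"
  have A0: "0 \<in> A" unfolding A_def using c geo_hd[OF G] geo_hd[OF G'] by simp
  have Af: "finite A" unfolding A_def by (rule finite_subset[of _ "{..<c}"]) auto
  define a where "a = Max A"
  have aA: "a \<in> A" unfolding a_def using Af A0 Max_in by blast
  hence a1: "a < c" "g!a = g'!a" unfolding A_def by auto
  have a2: "\<And>r. a < r \<Longrightarrow> r < c \<Longrightarrow> g!r \<noteq> g'!r"
  proof -
    fix r assume "a < r" "r < c"
    show "g!r \<noteq> g'!r"
    proof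
      assume "g!r = g'!r"
      hence "r \<in> A" unfolding A_def using \<open>r < c\<close> by simp
      hence "r \<le> a" unfolding a_def using Af Max_ge by blast
      thus False using \<open>a < r\<close> by simp
    qed
  qed
  define n where "n = length g - 1"
  have gn: "g!n = g'!n" unfolding n_def using geo_last[OF G] geo_last[OF G'] len by simp
  define b where "b = (LEAST b. c < b \<and> b \<le> n \<and> g!b = g'!b)"
  have b1: "c < b \<and> b \<le> n \<and> g!b = g'!b" unfolding b_def
    by (rule LeastI[of _ n]) (use gn c n_def in auto)
  have b2: "\<And>r. c < r \<Longrightarrow> r < b \<Longrightarrow> g!r \<noteq> g'!r"
  proof -
    fix r assume r: "c < r" "r < b"
    show "g!r \<noteq> g'!r"
    proof
      assume "g!r = g'!r"
      hence "b \<le> r" unfolding b_def using r b1 by (intro Least_le) simp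
      thus False using r by simp
    qed
  qed
  have mid: "\<And>r. a < r \<Longrightarrow> r < b \<Longrightarrow> g!r \<noteq> g'!r"
    using a2 b2 ne by (metis linorder_neqE_nat)
  have bn: "b \<le> n" "c < b" using b1 by simp_all
  have bl: "b < length g" using bn unfolding n_def by linarith
  define L where "L = b - a"
  have L2: "L \<ge> 2" unfolding L_def using a1(1) bn by linarith
  define f where "f m = (if m \<le> L then g!(a+m) else g'!(b - (m - L)))" for m
  define N where "N = L + (L - 1)"
  define cc where "cc = map f [0..<Suc N]"
  have "simple_loop adj cc"
    unfolding simple_loop_def
  proof (intro conjI)
    show "3 \<le> length cc" unfolding cc_def mu_len N_def using L2 by linarith
    show "distinct cc" unfolding cc_def
    proof (rule distinct_map_upt)
      fix m1 m2 assume m: "m1 \<le> N" "m2 \<le> N" and eq: "f m1 = f m2"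
      show "m1 = m2"
      proof (cases "m1 \<le> L")
        case T1: True
        show ?thesis
        proof (cases "m2 \<le> L")
          case True
          hence "g!(a+m1) = g!(a+m2)" using eq T1 f_def by simp
          moreover have "a + m1 < length g" "a + m2 < length g" using T1 True bl L_def a1 bn b1 by linarith+
          ultimately have "a + m1 = a + m2" using Kg by blast
          thus ?thesis by simp
        next
          case False
          hence "g!(a+m1) = g'!(b - (m2 - L))" using eq T1 f_def by simp
          moreover have "a + m1 < length g" "b - (m2 - L) < length g" using T1 bl L_def a1 bn b1 by linarith+
          ultimately have r: "a + m1 = b - (m2 - L)" using K by blast
          have "a < a + m1" "a + m1 < b" using r False m(2) N_def L2 L_def a1(1) bn by linarith+
          thus ?thesis using mid[of "a+m1"] r \<open>g!(a+m1) = g'!(b - (m2 - L))\<close> by simp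
        qed
      next
        case F1: False
        show ?thesis
        proof (cases "m2 \<le> L")
          case True
          hence "g!(a+m2) = g'!(b - (m1 - L))" using eq F1 f_def by simp
          moreover have "a + m2 < length g" "b - (m1 - L) < length g" using True bl L_def a1 bn b1 by linarith+
          ultimately have r: "a + m2 = b - (m1 - L)" using K by blast
          have "a < a + m2" "a + m2 < b" using r F1 m(1) N_def L2 L_def a1(1) bn by linarith+
          thus ?thesis using mid[of "a+m2"] r \<open>g!(a+m2) = g'!(b - (m1 - L))\<close> by simp
        next
          case False
          hence "g'!(b - (m1 - L)) = g'!(b - (m2 - L))" using eq F1 f_def by simp
          moreover have "b - (m1 - L) < length g" "b - (m2 - L) < length g" using bl by linarith+
          ultimately have "b - (m1 - L) = b - (m2 - L)" using Kg' by blast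
          thus ?thesis using F1 False m N_def L_def a1 bn b1 by linarith
        qed
      qed
    qed
    show "successively adj cc"
    proof -
      have "walk adj cc" unfolding cc_def
      proof (rule walk_map_upt)
        fix m assume m: "m < N"
        show "adj (f m) (f (Suc m))"
        proof (cases "m < L")
          case True
          hence "f m = g!(a+m)" "f (Suc m) = g!(Suc (a+m))" unfolding f_def by auto
          moreover have "Suc (a+m) < length g" using True bl L_def a1 bn b1 by linarith
          ultimately show ?thesis using walk_nth[OF Wg] by simp
        next
          case False
          define r where "r = b - (Suc m - L)"
          have fs: "f (Suc m) = g'!r" unfolding f_def r_def using False by simp
          have r1: "Suc r = b - (m - L)" unfolding r_def using False m N_def L_def a1 bn b1 by linarith
          have "Suc r < length g'" using r1 bl len by linarith
          hence e0: "adj (g'!r) (g'!Suc r)" using walk_nth[OF Wg'] by blast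
          have e: "adj (g'!r) (g'!(b - (m - L)))" using e0 r1 by metis
          show ?thesis
          proof (cases "m = L")
            case True
            hence "f m = g!b" unfolding f_def L_def using a1 bn b1 by simp
            thus ?thesis using fs e adj_sym b1 True by simp
          next
            case False
            hence "f m = g'!(b - (m - L))" unfolding f_def using \<open>\<not> m < L\<close> by simp
            thus ?thesis using fs e adj_sym by simp
          qed
        qed
      qed
      thus ?thesis by (simp add: walk_def)
    qed
    show "adj (last cc) (hd cc)"
    proof -
      have "last cc = f N" "hd cc = f 0" unfolding cc_def by (simp_all only: mu_last mu_hd)
      moreover have "f N = g'!(Suc a)"
      proof -
        have "\<not> N \<le> L" "b - (N - L) = Suc a" unfolding N_def using L2 L_def a1(1) bn by linarith+
        thus ?thesis unfolding f_def by simp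
      qed
      moreover have "f 0 = g'!a" unfolding f_def using a1 by simp
      moreover have "Suc a < length g'" using a1 bn b1 bl len by linarith
      ultimately show ?thesis using walk_nth[OF Wg', of a] adj_sym by simp
    qed
  qed
  then obtain Q where Q: "Q \<in> I" "set cc \<subseteq> SV Q" using loop_piece by blast
  have i1: "c - 1 - a \<le> L" "a + (c - 1 - a) = c - 1" "Suc c - a \<le> L" "a + (Suc c - a) = Suc c"
    unfolding L_def using a1(1) bn by linarith+
  have "g!(c-1) = f (c - 1 - a)" "g!(Suc c) = f (Suc c - a)"
    unfolding f_def using i1 by simp_all
  moreover have "c - 1 - a \<le> N" "Suc c - a \<le> N" using i1 N_def by linarith+
  hence "f (c - 1 - a) \<in> set cc" "f (Suc c - a) \<in> set cc"
    unfolding cc_def mu_set by auto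
  ultimately show False using nc Q by (metis subsetD)
qed

lemma proj:
  assumes G: "geodesic adj e x g" and s: "s < length g" and i: "i \<in> I" and gs: "g!s \<in> SV i"
    and before: "\<And>m. m < s \<Longrightarrow> g!m \<notin> SV i" and v: "v \<in> SV i" "v \<noteq> g!s"
  shows "gdist adj e (g!s) < gdist adj e v"
proof (rule ccontr)
  assume "\<not> gdist adj e (g!s) < gdist adj e v"
  hence vs: "gdist adj e v \<le> s" using geodesic_dist[OF G s] by simp
  have Wg: "walk adj g" using G by (simp add: geo_walk)
  have Kg: "\<And>m m'. m < length g \<Longrightarrow> m' < length g \<Longrightarrow> g!m = g!m' \<Longrightarrow> m = m'"
    using geo_cross[OF G G] by simp
  have eV: "e \<in> V"
  proof (cases s)
    case 0 thus ?thesis using gs geo_hd[OF G] SV_V[OF i] by auto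
  next
    case (Suc s')
    hence "adj (g!0) (g!1)" using walk_nth[OF Wg, of 0] s by simp
    thus ?thesis using adj_V geo_hd[OF G] by auto
  qed
  have vV: "v \<in> V" using v SV_V[OF i] by auto
  have "\<exists>p. walk adj p \<and> set p \<subseteq> V \<and> hd p = e \<and> last p = v"
    using conn eV vV unfolding connected_graph_def by blast
  then obtain p where P: "walk adj p" "hd p = e" "last p = v" by blast
  obtain \<gamma> where \<Gamma>: "geodesic adj e v \<gamma>" using gdist_ex[OF P] by blast
  have W\<gamma>: "walk adj \<gamma>" using \<Gamma> by (simp add: geo_walk)
  define d0 where "d0 = length \<gamma> - 1"
  have d0s: "d0 \<le> s" using vs geo_len[OF \<Gamma>] d0_def by simp
  have d0l: "d0 < length \<gamma>" using geo_len[OF \<Gamma>] d0_def by simp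
  have \<gamma>d0: "\<gamma>!d0 = v" using geo_last[OF \<Gamma>] d0_def by simp
  have K\<gamma>: "\<And>m m'. m < length \<gamma> \<Longrightarrow> m' < length \<gamma> \<Longrightarrow> \<gamma>!m = \<gamma>!m' \<Longrightarrow> m = m'"
    using geo_cross[OF \<Gamma> \<Gamma>] by simp
  have Kx: "\<And>m m'. m < length \<gamma> \<Longrightarrow> m' < length g \<Longrightarrow> \<gamma>!m = g!m' \<Longrightarrow> m = m'"
    using geo_cross[OF \<Gamma> G] by simp
  define d where "d = (LEAST d. d \<le> d0 \<and> \<gamma>!d \<in> SV i)"
  have d1: "d \<le> d0 \<and> \<gamma>!d \<in> SV i" unfolding d_def by (rule LeastI[of _ d0]) (use \<gamma>d0 v in auto)
  have d2: "\<And>m. m < d \<Longrightarrow> \<gamma>!m \<notin> SV i"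
  proof -
    fix m assume m: "m < d"
    show "\<gamma>!m \<notin> SV i"
    proof
      assume "\<gamma>!m \<in> SV i"
      hence "d \<le> m" unfolding d_def using m d1 by (intro Least_le) simp
      thus False using m by simp
    qed
  qed
  have dd: "d \<le> d0" "\<gamma>!d \<in> SV i" using d1 by simp_all
  have dl: "d < length \<gamma>" using dd d0l by linarith
  have ds: "d \<le> s" using dd d0s by linarith
  have v'ne: "\<gamma>!d \<noteq> g!s"
  proof
    assume eq: "\<gamma>!d = g!s"
    hence "d = s" using Kx dl s by blast
    hence "d = d0" using dd d0s by simp
    thus False using eq \<gamma>d0 v(2) by simp
  qed
  define A where "A = {a. a \<le> d \<and> \<gamma>!a = g!a}"
  have A0: "0 \<in> A" unfolding A_def using geo_hd[OF G] geo_hd[OF \<Gamma>] by simp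
  have Af: "finite A" unfolding A_def by (rule finite_subset[of _ "{..d}"]) auto
  define a where "a = Max A"
  have aA: "a \<in> A" unfolding a_def using Af A0 Max_in by blast
  hence a1: "a \<le> d" "\<gamma>!a = g!a" unfolding A_def by auto
  have a2: "\<And>r. a < r \<Longrightarrow> r \<le> d \<Longrightarrow> \<gamma>!r \<noteq> g!r"
  proof -
    fix r assume "a < r" "r \<le> d"
    show "\<gamma>!r \<noteq> g!r"
    proof
      assume "\<gamma>!r = g!r"
      hence "r \<in> A" unfolding A_def using \<open>r \<le> d\<close> by simp
      hence "r \<le> a" unfolding a_def using Af Max_ge by blast
      thus False using \<open>a < r\<close> by simp
    qed
  qed
  have ad: "a < d"
  proof (rule ccontr)
    assume "\<not> a < d"
    hence "a = d" using a1 by simp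
    hence eq: "\<gamma>!d = g!d" using a1 by simp
    show False
    proof (cases "d < s")
      case True thus False using before[of d] eq dd by simp
    next
      case False hence "d = s" using ds by simp
      thus False using eq v'ne by simp
    qed
  qed
  define D where "D = d - a"
  define f where "f m = (if m \<le> D then \<gamma>!(d-m) else g!(a + (m - D)))" for m
  define N where "N = D + (s - a)"
  define w where "w = map f [0..<Suc N]"
  have D1: "D \<ge> 1" "s - a \<ge> 1" unfolding D_def using ad ds by linarith+
  have "walk adj w" unfolding w_def
  proof (rule walk_map_upt)
    fix m assume m: "m < N"
    show "adj (f m) (f (Suc m))"
    proof (cases "m < D")
      case True
      define r where "r = d - Suc m"
      have r1: "Suc r = d - m" "r < d" unfolding r_def using True ad D_def by linarith+
      have fm: "f m = \<gamma>!(Suc r)" "f (Suc m) = \<gamma>!r"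
      proof -
        show "f m = \<gamma>!(Suc r)" unfolding f_def using True by (simp only: r1 if_True less_imp_le)
        have "Suc m \<le> D" using True by simp
        thus "f (Suc m) = \<gamma>!r" unfolding f_def r_def by simp
      qed
      have "Suc r < length \<gamma>" using r1 dl by linarith
      thus ?thesis using walk_nth[OF W\<gamma>, of r] adj_sym fm by simp
    next
      case False
      define r where "r = a + (m - D)"
      have r1: "f m = g!r" "f (Suc m) = g!(Suc r)"
      proof -
        show "f (Suc m) = g!(Suc r)" unfolding f_def r_def using False
          by (simp add: Suc_diff_le)
        show "f m = g!r"
        proof (cases "m = D")
          case True thus ?thesis unfolding f_def r_def D_def using a1 ad by simp
        next
          case F: False thus ?thesis unfolding f_def r_def using False by simp
        qed
      qed
      have "Suc r < length g" unfolding r_def using m N_def False s ad ds by linarith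
      thus ?thesis using walk_nth[OF Wg, of r] r1 by simp
    qed
  qed
  moreover have "distinct w" unfolding w_def
  proof (rule distinct_map_upt)
    have mix: "\<And>m1 m2. m1 \<le> D \<Longrightarrow> \<not> m2 \<le> D \<Longrightarrow> m2 \<le> N \<Longrightarrow> f m1 \<noteq> f m2"
    proof
      fix m1 m2 assume m: "m1 \<le> D" "\<not> m2 \<le> D" "m2 \<le> N" and eq: "f m1 = f m2"
      hence eq2: "\<gamma>!(d - m1) = g!(a + (m2 - D))" unfolding f_def by simp
      have "d - m1 < length \<gamma>" "a + (m2 - D) < length g" using dl m N_def s ad ds by linarith+
      hence r: "d - m1 = a + (m2 - D)" using Kx eq2 by blast
      have "a < d - m1" "d - m1 \<le> d" using r m by linarith+
      hence "\<gamma>!(d-m1) \<noteq> g!(d-m1)" using a2 by blast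
      thus False using eq2 r by simp
    qed
    fix m1 m2 assume m: "m1 \<le> N" "m2 \<le> N" and eq: "f m1 = f m2"
    show "m1 = m2"
    proof (cases "m1 \<le> D")
      case T1: True
      show ?thesis
      proof (cases "m2 \<le> D")
        case True
        hence "\<gamma>!(d - m1) = \<gamma>!(d - m2)" using eq T1 f_def by simp
        moreover have "d - m1 < length \<gamma>" "d - m2 < length \<gamma>" using dl by linarith+
        ultimately have "d - m1 = d - m2" using K\<gamma> by blast
        thus ?thesis using T1 True D_def ad by linarith
      next
        case False thus ?thesis using mix[OF T1 False m(2)] eq by simp
      qed
    next
      case F1: False
      show ?thesis
      proof (cases "m2 \<le> D")
        case True thus ?thesis using mix[OF True F1 m(1)] eq by simp
      next
        case False
        hence "g!(a + (m1 - D)) = g!(a + (m2 - D))" using eq F1 f_def by simp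
        moreover have "a + (m1 - D) < length g" "a + (m2 - D) < length g" using m N_def s ad ds by linarith+
        ultimately have "a + (m1 - D) = a + (m2 - D)" using Kg by blast
        thus ?thesis using F1 False by linarith
      qed
    qed
  qed
  moreover have "length w \<ge> 3" unfolding w_def mu_len N_def using D1 by linarith
  moreover have "hd w \<in> SV i" unfolding w_def mu_hd f_def using dd by simp
  moreover have "last w \<in> SV i"
  proof -
    have "\<not> N \<le> D" "a + (N - D) = s" unfolding N_def using D1 ad ds by linarith+
    thus ?thesis unfolding w_def mu_last f_def using gs by simp
  qed
  moreover have "\<And>m. 0 < m \<Longrightarrow> m < length w - 1 \<Longrightarrow> w!m \<notin> SV i"
  proof -
    fix m assume m: "0 < m" "m < length w - 1"
    hence m2: "m < N" unfolding w_def mu_len by simp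
    hence wm: "w!m = f m" unfolding w_def using mu_nth[of m N f] by simp
    show "w!m \<notin> SV i"
    proof (cases "m \<le> D")
      case True
      have "d - m < d" using m(1) True D_def ad by linarith
      thus ?thesis using wm True d2 unfolding f_def by simp
    next
      case False
      have "a + (m - D) < s" using m2 N_def False by linarith
      thus ?thesis using wm False before unfolding f_def by simp
    qed
  qed
  ultimately show False using core[OF i] by blast
qed

lemma geo_V:
  assumes eV: "e \<in> V" and G: "geodesic adj e x g" and m: "m < length g"
  shows "g!m \<in> V"
proof (cases m)
  case 0 thus ?thesis using geo_hd[OF G] eV by simp
next
  case (Suc m')
  thus ?thesis using walk_nth[OF geo_walk[OF G], of m'] m adj_V by simp
qed

lemma build:
  assumes eV: "e \<in> V" and G: "geodesic adj e x g"
  shows "p \<le> length g - 1 \<Longrightarrow> pre I SV g (length g - 1) p \<Longrightarrow>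
    \<exists>k P s t. s 0 = p \<and> t k = length g - 1 \<and>
      (\<forall>j\<le>k. segok I SV g (length g - 1) (P j) (s j) (t j)) \<and>
      (\<forall>j<k. linkok I SV g (t j) (s (Suc j)) (t (Suc j)))"
proof (induction "length g - 1 - p" arbitrary: p rule: less_induct)
  case less
  define n where "n = length g - 1"
  have pn: "p \<le> n" using less.prems n_def by simp
  have pre: "pre I SV g n p" using less.prems n_def by simp
  have Wg: "walk adj g" using G by (simp add: geo_walk)
  have Dg: "distinct g" using G by (simp add: geodesic_distinct)
  have g0: "g \<noteq> []" using Wg by (simp add: walk_def)
  have nl: "n < length g" using g0 n_def by simp
  obtain Q tt where seg: "segok I SV g n Q p tt"
  proof (cases "p < n \<and> cn I SV (g!p) (g!Suc p)")
    case True
    then obtain Q where Q: "Q \<in> I" "g!p \<in> SV Q" "g!Suc p \<in> SV Q" by (auto simp: cn_def)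
    define M where "M = {m. m \<le> n \<and> g!m \<in> SV Q}"
    have Mf: "finite M" unfolding M_def by (rule finite_subset[of _ "{..n}"]) auto
    have SpM: "Suc p \<in> M" unfolding M_def using True Q by simp
    define tt where "tt = Max M"
    have ttM: "tt \<in> M" unfolding tt_def using Mf SpM Max_in by blast
    have tt1: "Suc p \<le> tt" unfolding tt_def using Mf SpM Max_ge by blast
    have tt2: "tt < n \<Longrightarrow> g!Suc tt \<notin> SV Q"
    proof
      assume "tt < n" "g!Suc tt \<in> SV Q"
      hence "Suc tt \<in> M" unfolding M_def by simp
      hence "Suc tt \<le> tt" unfolding tt_def using Mf Max_ge by blast
      thus False by simp
    qed
    have mn: "0 < p \<Longrightarrow> g!(p-1) \<notin> SV Q"
    proof
      assume "0 < p" "g!(p-1) \<in> SV Q"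
      hence c1: "cn I SV (g!(p-1)) (g!p)" using Q unfolding cn_def by blast
      show False using pre \<open>0 < p\<close> c1 Q \<open>g!(p-1) \<in> SV Q\<close> unfolding pre_def by blast
    qed
    have "segok I SV g n Q p tt" unfolding segok_def using Q ttM tt1 tt2 mn unfolding M_def by auto
    thus ?thesis using that by blast
  next
    case False
    have "g!p \<in> V" using geo_V[OF eV G] pn nl by simp
    then obtain Q where Q: "Q \<in> I" "g!p \<in> SV Q" using vertex_piece by blast
    have mx: "p < n \<Longrightarrow> g!Suc p \<notin> SV Q" using False Q unfolding cn_def by blast
    have mn: "0 < p \<Longrightarrow> g!(p-1) \<notin> SV Q"
    proof
      assume "0 < p" "g!(p-1) \<in> SV Q"
      hence c1: "cn I SV (g!(p-1)) (g!p)" using Q unfolding cn_def by blast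
      show False using pre \<open>0 < p\<close> c1 False unfolding pre_def by blast
    qed
    have "segok I SV g n Q p p" unfolding segok_def using Q mx mn pn False by auto
    thus ?thesis using that by blast
  qed
  have sg: "Q \<in> I" "p \<le> tt" "tt \<le> n" "g!p \<in> SV Q" "g!tt \<in> SV Q"
    "tt < n \<Longrightarrow> g!Suc tt \<notin> SV Q" "p = tt \<Longrightarrow> tt < n \<Longrightarrow> \<not> cn I SV (g!tt) (g!Suc tt)"
    using seg unfolding segok_def by auto
  show ?case
  proof (cases "tt = n")
    case True
    show ?thesis
      by (rule exI[of _ 0], rule exI[of _ "\<lambda>_. Q"], rule exI[of _ "\<lambda>_. p"], rule exI[of _ "\<lambda>_. tt"])
         (use seg True n_def in simp)
  next
    case False
    hence ttn: "tt < n" using sg by simp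
    define p' where "p' = (if cn I SV (g!tt) (g!Suc tt) then tt else Suc tt)"
    have pp': "p < p'"
    proof (cases "cn I SV (g!tt) (g!Suc tt)")
      case True
      hence "p \<noteq> tt" using sg(7) ttn by blast
      thus ?thesis using True sg(2) p'_def by simp
    next
      case False thus ?thesis using sg(2) p'_def by simp
    qed
    have p'n: "p' \<le> n" using ttn p'_def by simp
    have pre': "pre I SV g n p'"
    proof (cases "cn I SV (g!tt) (g!Suc tt)")
      case True
      hence pt: "p' = tt" using p'_def by simp
      have "\<forall>Q'\<in>I. g!tt \<in> SV Q' \<longrightarrow> g!Suc tt \<in> SV Q' \<longrightarrow> g!(tt-1) \<notin> SV Q'"
      proof (intro ballI impI notI)
        fix Q' assume Q': "Q' \<in> I" "g!tt \<in> SV Q'" "g!Suc tt \<in> SV Q'" "g!(tt-1) \<in> SV Q'"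
        have ptt: "p < tt" using pp' pt by simp
        have "g!(tt-1) \<in> SV Q" using convex[OF sg(1) Wg Dg _ sg(4) sg(5), of "tt-1"] ttn nl ptt by simp
        moreover have "g!(tt-1) \<noteq> g!tt" using Dg nth_eq_iff_index_eq[OF Dg, of "tt-1" tt] ttn nl ptt by simp
        ultimately have "Q' = Q" using two_common[OF Q'(1) sg(1)] Q'(2,4) sg(5) by blast
        thus False using Q'(3) sg(6) ttn by simp
      qed
      thus ?thesis unfolding pre_def pt using True ttn by simp
    next
      case False
      hence "p' = Suc tt" using p'_def by simp
      thus ?thesis unfolding pre_def using False by simp
    qed
    have "length g - 1 - p' < length g - 1 - p" using pp' p'n n_def by linarith
    then obtain k P s t where IH: "s 0 = p'" "t k = length g - 1"
      "\<forall>j\<le>k. segok I SV g (length g - 1) (P j) (s j) (t j)"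
      "\<forall>j<k. linkok I SV g (t j) (s (Suc j)) (t (Suc j))"
      using less.hyps[of p'] p'n pre' n_def by blast
    have s0: "s 0 \<le> t 0" "t 0 \<le> n" using IH(3) unfolding segok_def n_def by auto
    have s0e: "s 0 = t 0 \<Longrightarrow> t 0 < n \<Longrightarrow> \<not> cn I SV (g!t 0) (g!Suc (t 0))"
      using IH(3) unfolding segok_def n_def by auto
    have lk: "linkok I SV g tt p' (t 0)"
      unfolding linkok_def
    proof (intro conjI impI)
      show "tt < t 0"
      proof (cases "cn I SV (g!tt) (g!Suc tt)")
        case True
        hence pt: "p' = tt" using p'_def by simp
        show ?thesis
        proof (rule ccontr)
          assume "\<not> tt < t 0"
          hence "t 0 = tt" "s 0 = t 0" using s0 IH(1) pt by simp_all
          thus False using s0e ttn True by simp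
        qed
      next
        case False thus ?thesis using p'_def s0 IH(1) by simp
      qed
      show "tt \<le> p'" "p' \<le> Suc tt" using p'_def by simp_all
      show "p' = Suc tt \<Longrightarrow> \<not> cn I SV (g!tt) (g!Suc tt)" using p'_def by auto
    qed
    define P2 where "P2 = (\<lambda>j. if j = 0 then Q else P (j - 1))"
    define s2 where "s2 = (\<lambda>j. if j = 0 then p else s (j - 1))"
    define t2 where "t2 = (\<lambda>j. if j = 0 then tt else t (j - 1))"
    let ?P = P2 let ?s = s2 let ?t = t2
    show ?thesis
    proof (rule exI[of _ "Suc k"], rule exI[of _ P2], rule exI[of _ s2], rule exI[of _ t2], intro conjI)
      show "?s 0 = p" by (simp add: s2_def)
      show "?t (Suc k) = length g - 1" using IH(2) by (simp add: t2_def)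
      show "\<forall>j\<le>Suc k. segok I SV g (length g - 1) (?P j) (?s j) (?t j)"
      proof (intro allI impI)
        fix j assume "j \<le> Suc k"
        thus "segok I SV g (length g - 1) (?P j) (?s j) (?t j)"
          using seg IH(3) n_def unfolding P2_def s2_def t2_def by (cases j) auto
      qed
      show "\<forall>j<Suc k. linkok I SV g (?t j) (?s (Suc j)) (?t (Suc j))"
      proof (intro allI impI)
        fix j assume "j < Suc k"
        thus "linkok I SV g (?t j) (?s (Suc j)) (?t (Suc j))"
          using lk IH(1,4) unfolding s2_def t2_def by (cases j) auto
      qed
    qed
  qed
qed

lemma main:
  assumes eV: "e \<in> V" and xV: "x \<in> V"
  shows "\<exists>(ids :: 'i list) (xs :: 'a list) (k :: nat).
           length ids = Suc k \<and> length xs = Suc k \<and> distinct ids \<and> set ids \<subseteq> I \<and>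
           xs ! k = x \<and>
           (\<forall>g. geodesic adj e x g \<longrightarrow>
              (\<exists>s t :: nat \<Rightarrow> nat.
                 s 0 = 0 \<and> t k = length g - 1 \<and>
                 (\<forall>j\<le>k. s j \<le> t j \<and>
                    g ! (s j) \<in> SV (ids ! j) \<and>
                    (\<forall>v\<in>SV (ids ! j). v \<noteq> g ! (s j) \<longrightarrow> gdist adj e (g ! (s j)) < gdist adj e v) \<and>
                    g ! (t j) = xs ! j \<and>
                    (\<forall>m. s j \<le> m \<and> m \<le> t j \<longrightarrow> g ! m \<in> SV (ids ! j)) \<and>
                    (\<forall>m. s j \<le> m \<and> m < t j \<longrightarrow> SE (ids ! j) (g ! m) (g ! Suc m))) \<and>
                 (\<forall>j<k. t j \<le> s (Suc j) \<and> s (Suc j) \<le> Suc (t j))))"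
proof -
  have "\<exists>p. walk adj p \<and> set p \<subseteq> V \<and> hd p = e \<and> last p = x"
    using conn eV xV unfolding connected_graph_def by blast
  then obtain p where P: "walk adj p" "hd p = e" "last p = x" by blast
  obtain g0 where G0: "geodesic adj e x g0" using gdist_ex[OF P] by blast
  define n where "n = length g0 - 1"
  have W0: "walk adj g0" and D0: "distinct g0" using G0 by (simp_all add: geo_walk geodesic_distinct)
  have g00: "g0 \<noteq> []" using W0 by (simp add: walk_def)
  have nl: "n < length g0" using g00 n_def by simp
  have "pre I SV g0 (length g0 - 1) 0" by (simp add: pre_def)
  then obtain k P s t where B: "s 0 = 0" "t k = n"
      "\<forall>j\<le>k. segok I SV g0 n (P j) (s j) (t j)"
      "\<forall>j<k. linkok I SV g0 (t j) (s (Suc j)) (t (Suc j))"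
    using build[OF eV G0, of 0] n_def by auto
  have Sg: "\<And>j. j \<le> k \<Longrightarrow> P j \<in> I \<and> s j \<le> t j \<and> t j \<le> n \<and> g0!(s j) \<in> SV (P j) \<and> g0!(t j) \<in> SV (P j) \<and>
     (t j < n \<longrightarrow> g0!Suc (t j) \<notin> SV (P j)) \<and> (0 < s j \<longrightarrow> g0!(s j - 1) \<notin> SV (P j)) \<and>
     (s j = t j \<and> t j < n \<longrightarrow> \<not> cn I SV (g0!t j) (g0!Suc (t j)))"
    using B(3) unfolding segok_def by blast
  have Lk: "\<And>j. j < k \<Longrightarrow> t j < t (Suc j) \<and> t j \<le> s (Suc j) \<and> s (Suc j) \<le> Suc (t j) \<and>
      (s (Suc j) = Suc (t j) \<longrightarrow> \<not> cn I SV (g0!t j) (g0!Suc (t j)))"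
    using B(4) unfolding linkok_def by blast
  have CV: "\<And>j m. j \<le> k \<Longrightarrow> s j \<le> m \<Longrightarrow> m \<le> t j \<Longrightarrow> g0!m \<in> SV (P j)"
  proof -
    fix j m assume j: "j \<le> k" and m: "s j \<le> m" "m \<le> t j"
    have "t j < length g0" using Sg[OF j] nl by linarith
    thus "g0!m \<in> SV (P j)" using convex[OF _ W0 D0, of "P j" "t j" "s j" m] Sg[OF j] m by blast
  qed
  have Tmono: "\<And>j1 j2. j1 < j2 \<Longrightarrow> j2 \<le> k \<Longrightarrow> t j1 < t j2"
  proof -
    fix j1 j2 assume "j1 < j2" "j2 \<le> k"
    thus "t j1 < t j2"
    proof (induction j2)
      case 0 thus ?case by simp
    next
      case (Suc j)
      have "t j < t (Suc j)" using Lk[of j] Suc.prems by simp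
      thus ?case using Suc by (cases "j1 = j") auto
    qed
  qed
  define cutpt where "cutpt c \<longleftrightarrow> c = 0 \<or> c = n \<or> (0 < c \<and> c < n \<and> \<not> cn I SV (g0!(c-1)) (g0!Suc c))" for c
  have CLt: "\<And>j. j \<le> k \<Longrightarrow> cutpt (t j)"
  proof -
    fix j assume j: "j \<le> k"
    note S = Sg[OF j]
    show "cutpt (t j)"
    proof (cases "t j = 0 \<or> t j = n")
      case True thus ?thesis unfolding cutpt_def by blast
    next
      case False
      hence tj: "0 < t j" "t j < n" using S by auto
      have "\<not> cn I SV (g0!(t j - 1)) (g0!Suc (t j))"
      proof
        assume "cn I SV (g0!(t j - 1)) (g0!Suc (t j))"
        then obtain Q where Q: "Q \<in> I" "g0!(t j - 1) \<in> SV Q" "g0!Suc (t j) \<in> SV Q" unfolding cn_def by blast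
        have Qt: "g0!(t j) \<in> SV Q" using convex[OF Q(1) W0 D0 _ Q(2) Q(3), of "t j"] tj nl by simp
        show False
        proof (cases "s j = t j")
          case True
          thus False using S tj Q Qt unfolding cn_def by blast
        next
          case False
          have "s j \<le> t j" using S by simp
          hence "s j \<le> t j - 1" using False by linarith
          hence "g0!(t j - 1) \<in> SV (P j)" using CV[OF j, of "t j - 1"] by simp
          moreover have "g0!(t j - 1) \<noteq> g0!(t j)" using nth_eq_iff_index_eq[OF D0, of "t j - 1" "t j"] tj nl by simp
          ultimately have "Q = P j" using two_common[OF Q(1), of "P j"] Q(2) Qt S by blast
          thus False using Q(3) S tj by simp
        qed
      qed
      thus ?thesis unfolding cutpt_def using tj by blast
    qed
  qed
  have CLs: "\<And>j. j \<le> k \<Longrightarrow> cutpt (s j)"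
  proof -
    fix j assume j: "j \<le> k"
    show "cutpt (s j)"
    proof (cases j)
      case 0 thus ?thesis using B(1) unfolding cutpt_def by simp
    next
      case (Suc j')
      have L: "t j' \<le> s j" "s j \<le> Suc (t j')" "s j = Suc (t j') \<longrightarrow> \<not> cn I SV (g0!t j') (g0!Suc (t j'))"
        using Lk[of j'] Suc j by auto
      show ?thesis
      proof (cases "s j = t j'")
        case True thus ?thesis using CLt[of j'] Suc j by simp
      next
        case False
        hence sj: "s j = Suc (t j')" using L by simp
        have sn: "s j \<le> n" using Sg[OF j] by simp
        show ?thesis
        proof (cases "s j = n")
          case True thus ?thesis unfolding cutpt_def by blast
        next
          case False
          hence sn2: "s j < n" using sn by simp
          have "\<not> cn I SV (g0!(s j - 1)) (g0!Suc (s j))"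
          proof
            assume "cn I SV (g0!(s j - 1)) (g0!Suc (s j))"
            then obtain Q where Q: "Q \<in> I" "g0!(s j - 1) \<in> SV Q" "g0!Suc (s j) \<in> SV Q" unfolding cn_def by blast
            have Qs: "g0!(s j) \<in> SV Q" using convex[OF Q(1) W0 D0 _ Q(2) Q(3), of "s j"] sn2 nl by simp
            have "cn I SV (g0!t j') (g0!Suc (t j'))" unfolding cn_def using Q(1,2) Qs sj by auto
            thus False using L sj by simp
          qed
          thus ?thesis unfolding cutpt_def using sj sn2 by simp
        qed
      qed
    qed
  qed
  have SAME: "\<And>g c. geodesic adj e x g \<Longrightarrow> cutpt c \<Longrightarrow> c \<le> n \<Longrightarrow> g!c = g0!c"
  proof -
    fix g c assume G: "geodesic adj e x g" and c: "cutpt c" "c \<le> n"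
    have len: "length g = length g0" using geo_len[OF G] geo_len[OF G0] by simp
    show "g!c = g0!c"
    proof (cases "c = 0 \<or> c = n")
      case True thus ?thesis using geo_hd[OF G] geo_hd[OF G0] geo_last[OF G] geo_last[OF G0] len n_def by auto
    next
      case False
      hence c2: "0 < c" "c < length g0 - 1" "\<not> cn I SV (g0!(c-1)) (g0!Suc c)" using c unfolding cutpt_def n_def by auto
      show ?thesis using cut[OF G0 G c2(1,2)] c2(3) unfolding cn_def by blast
    qed
  qed
  have PR: "\<And>j v. j \<le> k \<Longrightarrow> v \<in> SV (P j) \<Longrightarrow> v \<noteq> g0!(s j) \<Longrightarrow> gdist adj e (g0!(s j)) < gdist adj e v"
  proof -
    fix j v assume j: "j \<le> k" and v: "v \<in> SV (P j)" "v \<noteq> g0!(s j)"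
    note S = Sg[OF j]
    have before: "\<And>m. m < s j \<Longrightarrow> g0!m \<notin> SV (P j)"
    proof
      fix m assume m: "m < s j" "g0!m \<in> SV (P j)"
      have "g0!(s j - 1) \<in> SV (P j)" using convex[OF _ W0 D0 _ m(2), of "s j" "s j - 1"] S m(1) nl by simp
      thus False using S m(1) by simp
    qed
    show "gdist adj e (g0!(s j)) < gdist adj e v"
      using proj[OF G0 _ _ _ before v] S nl by simp
  qed
  have DI: "distinct (map P [0..<Suc k])"
  proof (rule distinct_map_upt)
    fix j1 j2 assume j: "j1 \<le> k" "j2 \<le> k" and eq: "P j1 = P j2"
    show "j1 = j2"
    proof (rule ccontr)
      assume "j1 \<noteq> j2"
      then consider "j1 < j2" | "j2 < j1" by linarith
      thus False
      proof cases
        case 1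
        have tt: "t j1 < t j2" using Tmono[OF 1 j(2)] .
        have "g0!(t j2) \<in> SV (P j1)" using Sg[OF j(2)] eq by simp
        hence "g0!Suc (t j1) \<in> SV (P j1)"
          using convex[OF _ W0 D0 _ _ _, of "P j1" "t j2" "t j1" "Suc (t j1)"] Sg[OF j(1)] Sg[OF j(2)] tt nl by simp
        thus False using Sg[OF j(1)] Sg[OF j(2)] tt by simp
      next
        case 2
        have tt: "t j2 < t j1" using Tmono[OF 2 j(1)] .
        have "g0!(t j1) \<in> SV (P j2)" using Sg[OF j(1)] eq by simp
        hence "g0!Suc (t j2) \<in> SV (P j2)"
          using convex[OF _ W0 D0 _ _ _, of "P j2" "t j1" "t j2" "Suc (t j2)"] Sg[OF j(1)] Sg[OF j(2)] tt nl by simp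
        thus False using Sg[OF j(1)] Sg[OF j(2)] tt by simp
      qed
    qed
  qed
  define ids0 where "ids0 = map P [0..<Suc k]"
  define xs0 where "xs0 = map (\<lambda>j. g0!(t j)) [0..<Suc k]"
  show ?thesis
  proof (rule exI[of _ "ids0"], rule exI[of _ "xs0"], rule exI[of _ k],
         intro conjI allI impI)
    show "length (ids0) = Suc k" unfolding ids0_def by simp
    show "length (xs0) = Suc k" unfolding xs0_def by simp
    show "distinct (ids0)" unfolding ids0_def by (rule DI)
    show "set (ids0) \<subseteq> I" unfolding ids0_def using Sg by (auto simp del: upt_Suc)
    show "xs0 ! k = x" unfolding xs0_def using B(2) geo_last[OF G0] n_def by (simp del: upt_Suc add: mu_nth)
    fix g assume G: "geodesic adj e x g"
    have len: "length g = length g0" using geo_len[OF G] geo_len[OF G0] by simp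
    have Wg: "walk adj g" and Dg: "distinct g" using G by (simp_all add: geo_walk geodesic_distinct)
    have gs: "\<And>j. j \<le> k \<Longrightarrow> g!(s j) = g0!(s j)" using SAME[OF G] CLs Sg by (meson order_trans)
    have gt: "\<And>j. j \<le> k \<Longrightarrow> g!(t j) = g0!(t j)" using SAME[OF G] CLt Sg by blast
    show "\<exists>s t :: nat \<Rightarrow> nat.
                 s 0 = 0 \<and> t k = length g - 1 \<and>
                 (\<forall>j\<le>k. s j \<le> t j \<and>
                    g ! (s j) \<in> SV (ids0 ! j) \<and>
                    (\<forall>v\<in>SV (ids0 ! j). v \<noteq> g ! (s j) \<longrightarrow> gdist adj e (g ! (s j)) < gdist adj e v) \<and>
                    g ! (t j) = xs0 ! j \<and>
                    (\<forall>m. s j \<le> m \<and> m \<le> t j \<longrightarrow> g ! m \<in> SV (ids0 ! j)) \<and>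
                    (\<forall>m. s j \<le> m \<and> m < t j \<longrightarrow> SE (ids0 ! j) (g ! m) (g ! Suc m))) \<and>
                 (\<forall>j<k. t j \<le> s (Suc j) \<and> s (Suc j) \<le> Suc (t j))"
    proof (rule exI[of _ s], rule exI[of _ t], intro conjI allI impI)
      show "s 0 = 0" by (rule B(1))
      show "t k = length g - 1" using B(2) len n_def by simp
      fix j
      assume j: "j \<le> k"
      note S = Sg[OF j]
      have Pj: "ids0 ! j = P j" using j unfolding ids0_def by (simp del: upt_Suc add: mu_nth)
      have Xj: "xs0 ! j = g0!(t j)" using j unfolding xs0_def by (simp del: upt_Suc add: mu_nth)
      have tl: "t j < length g" using S len nl by linarith
      show "s j \<le> t j" using S by simp
      show "g ! (s j) \<in> SV (ids0 ! j)" unfolding Pj using gs[OF j] S by simp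
      show "\<forall>v\<in>SV (ids0 ! j). v \<noteq> g ! (s j) \<longrightarrow> gdist adj e (g ! (s j)) < gdist adj e v"
        unfolding Pj gs[OF j] using PR[OF j] by blast
      show "g ! (t j) = xs0 ! j" unfolding Xj using gt[OF j] .
      have inP: "\<And>m. s j \<le> m \<Longrightarrow> m \<le> t j \<Longrightarrow> g!m \<in> SV (P j)"
        using convex[OF _ Wg Dg tl, of "P j" "s j"] S gs[OF j] gt[OF j] by simp
      show "g ! m \<in> SV (ids0 ! j)" if "s j \<le> m \<and> m \<le> t j" for m
        unfolding Pj using inP that by blast
      show "SE (ids0 ! j) (g ! m) (g ! Suc m)" if m: "s j \<le> m \<and> m < t j" for m
      proof -
        have "adj (g!m) (g!Suc m)" using walk_nth[OF Wg, of m] m tl by simp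
        thus "SE (ids0 ! j) (g ! m) (g ! Suc m)"
          unfolding Pj using induced[of "P j"] S inP m by simp
      qed
    next
      fix j assume j: "j < k"
      show "t j \<le> s (Suc j)" "s (Suc j) \<le> Suc (t j)" using Lk[OF j] by simp_all
    qed
  qed
qed

end

theorem lemma4p4:
  fixes V :: "'a set" and adj :: "'a \<Rightarrow> 'a \<Rightarrow> bool"
    and I :: "'i set" and SV :: "'i \<Rightarrow> 'a set" and SE :: "'i \<Rightarrow> 'a \<Rightarrow> 'a \<Rightarrow> bool"
    and e :: 'a
  assumes "tree_graded V adj I SV SE"
    and "e \<in> V"
  shows "\<forall>x\<in>V. \<exists>(ids :: 'i list) (xs :: 'a list) (k :: nat).
           length ids = Suc k \<and> length xs = Suc k \<and> distinct ids \<and> set ids \<subseteq> I \<and>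
           xs ! k = x \<and>
           (\<forall>g. geodesic adj e x g \<longrightarrow>
              (\<exists>s t :: nat \<Rightarrow> nat.
                 s 0 = 0 \<and> t k = length g - 1 \<and>
                 (\<forall>j\<le>k. s j \<le> t j \<and>
                    g ! (s j) \<in> SV (ids ! j) \<and>
                    (\<forall>v\<in>SV (ids ! j). v \<noteq> g ! (s j) \<longrightarrow> gdist adj e (g ! (s j)) < gdist adj e v) \<and>
                    g ! (t j) = xs ! j \<and>
                    (\<forall>m. s j \<le> m \<and> m \<le> t j \<longrightarrow> g ! m \<in> SV (ids ! j)) \<and>
                    (\<forall>m. s j \<le> m \<and> m < t j \<longrightarrow> SE (ids ! j) (g ! m) (g ! Suc m))) \<and>
                 (\<forall>j<k. t j \<le> s (Suc j) \<and> s (Suc j) \<le> Suc (t j))))"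
proof -
  interpret TG V adj I SV SE by (rule TG.intro) (rule assms(1))
  show ?thesis
  proof (intro ballI)
    fix x assume "x \<in> V"
    thus "\<exists>(ids :: 'i list) (xs :: 'a list) (k :: nat).
           length ids = Suc k \<and> length xs = Suc k \<and> distinct ids \<and> set ids \<subseteq> I \<and>
           xs ! k = x \<and>
           (\<forall>g. geodesic adj e x g \<longrightarrow>
              (\<exists>s t :: nat \<Rightarrow> nat.
                 s 0 = 0 \<and> t k = length g - 1 \<and>
                 (\<forall>j\<le>k. s j \<le> t j \<and>
                    g ! (s j) \<in> SV (ids ! j) \<and>
                    (\<forall>v\<in>SV (ids ! j). v \<noteq> g ! (s j) \<longrightarrow> gdist adj e (g ! (s j)) < gdist adj e v) \<and>
                    g ! (t j) = xs ! j \<and>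
                    (\<forall>m. s j \<le> m \<and> m \<le> t j \<longrightarrow> g ! m \<in> SV (ids ! j)) \<and>
                    (\<forall>m. s j \<le> m \<and> m < t j \<longrightarrow> SE (ids ! j) (g ! m) (g ! Suc m))) \<and>
                 (\<forall>j<k. t j \<le> s (Suc j) \<and> s (Suc j) \<le> Suc (t j))))"
      using main[OF assms(2)] by blast
  qed
qed

end
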